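(* In the setting described in the context (genus-zero model, fixed real $t\in(0,1)$ transcendental over $\mathbb F$, fixed parametrization $s\mapsto(x(s),y(s))$), let $\widetilde\gamma_1(s)=\frac{A}{x(s)}-\frac{t\,d_{1,-1}}{y(s)}$ and $\widetilde\gamma_2(s)=\frac{B}{y(s)}-\frac{t\,d_{-1,1}}{x(s)}$. Then the field extensions $\mathbb C(s)/\mathbb C(\widetilde\gamma_1)$ and $\mathbb C(s)/\mathbb C(\widetilde\gamma_2)$ have degree $2$, and the divisors of these functions on $\mathbb P^1$ are \[(\widetilde\gamma_1)=P_1+P_2-0-\infty,\qquad(\widetilde\gamma_2)=P_3+P_4-0-\infty\] for some points $P_1,P_2,P_3,P_4$ of $\mathbb P^1$ distinct from $0$ and $\infty$.
   Context: Let $\mathcal S$ be one of $\mathcal S_1=\{(1,-1),(-1,1),(0,1)\}$, $\mathcal S_2=\{(1,-1),(-1,1),(1,0),(0,1)\}$, $\mathcal S_3=\{(1,-1),(-1,1),(1,1)\}$, $\mathcal S_4=\{(1,-1),(-1,1),(0,1),(1,1)\}$, $\mathcal S_5=\{(1,-1),(-1,1),(1,0),(0,1),(1,1)\}$, with weights $d_{i,j}>0$ for $(i,j)\in\mathcal S$, $d_{i,j}=0$ for $(i,j)\in\{(1,0),(0,1),(1,1)\}\setminus\mathcal S$, and Boltzmann weights $a,b>0$. Let $\mathbb F=\mathbb Q((d_{i,j}),a,b)$, $A=1-1/a$, $B=1-1/b$. Let $K(x,y)=xy\big(1-t(d_{1,-1}\tfrac xy+d_{-1,1}\tfrac yx+d_{1,0}x+d_{0,1}y+d_{1,1}xy)\big)$,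 and let $\overline{E_t}$ be the closure of $\{K=0\}$ in $\mathbb P^1\times\mathbb P^1$. It is known that there is a rational parametrization $\phi:s\mapsto(x(s),y(s))$ from $\mathbb P^1$ onto $\overline{E_t}$ with $x(s),y(s)\in\overline{\mathbb F(t)}(s)$, bijective except that $\phi(0)=\phi(\infty)=([0:1],[0:1])$, and such that the divisors of $x(s)$ and $y(s)$ are $(x)=0+\infty-Q_1-Q_2$ and $(y)=0+\infty-Q_3-Q_4$ for some points $Q_i\notin\{0,\infty\}$; such a $\phi$ is fixed. Divisors of nonzero $h\in\mathbb C(s)$ are $(h)=(h)_0-(h)_\infty$ (zeros minus poles with multiplicities). *)

theory Defs
  imports Complex_Main "HOL-Computational_Algebra.Computational_Algebra"
    "HOL-Computational_Algebra.Normalized_Fraction" "HOL-Computational_Algebra.Field_as_Ring"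
begin

definition is_subfield :: "complex set \<Rightarrow> bool" where
  "is_subfield K \<longleftrightarrow> 0 \<in> K \<and> 1 \<in> K \<and>
     (\<forall>u\<in>K. \<forall>v\<in>K. u + v \<in> K \<and> u - v \<in> K \<and> u * v \<in> K) \<and>
     (\<forall>u\<in>K. u \<noteq> 0 \<longrightarrow> inverse u \<in> K)"

definition gen_field :: "complex set \<Rightarrow> complex set" where
  "gen_field S = \<Inter> {K. is_subfield K \<and> S \<subseteq> K}"

definition algebraic_over :: "complex set \<Rightarrow> complex \<Rightarrow> bool" where
  "algebraic_over K z \<longleftrightarrow> (\<exists>p::complex poly. p \<noteq> 0 \<and> (\<forall>i. coeff p i \<in> K) \<and> poly p z = 0)"

definition transcendental_over :: "complex set \<Rightarrow> complex \<Rightarrow> bool" where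
  "transcendental_over K z \<longleftrightarrow> \<not> algebraic_over K z"

definition alg_closure :: "complex set \<Rightarrow> complex set" where
  "alg_closure K = {z. algebraic_over K z}"

definition step_set :: "nat \<Rightarrow> (int \<times> int) set" where
  "step_set k = (if k = 1 then {(1,-1),(-1,1),(0,1)}
     else if k = 2 then {(1,-1),(-1,1),(1,0),(0,1)}
     else if k = 3 then {(1,-1),(-1,1),(1,1)}
     else if k = 4 then {(1,-1),(-1,1),(0,1),(1,1)}
     else {(1,-1),(-1,1),(1,0),(0,1),(1,1)})"

definition admissible_weights :: "nat \<Rightarrow> (int \<Rightarrow> int \<Rightarrow> real) \<Rightarrow> bool" where
  "admissible_weights k d \<longleftrightarrow> k \<in> {1..5} \<and>
     (\<forall>(i,j)\<in>step_set k. d i j > 0) \<and>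
     (\<forall>(i,j)\<in>{(1,0),(0,1),(1,1)} - step_set k. d i j = 0)"

definition base_field :: "nat \<Rightarrow> (int \<Rightarrow> int \<Rightarrow> real) \<Rightarrow> real \<Rightarrow> real \<Rightarrow> complex set" where
  "base_field k d a b =
     gen_field ((\<lambda>(i,j). complex_of_real (d i j)) ` step_set k \<union> {complex_of_real a, complex_of_real b})"

text \<open>Points of P^1 are represented as complex option: None is infinity = [1:0],
  Some z is [z:1].  The closure of the curve {K = 0} in P^1 x P^1 is the zero set of the
  bihomogenisation of K(x,y) = x y - t (d_{1,-1} x^2 + d_{-1,1} y^2 + d_{1,0} x^2 y
  + d_{0,1} x y^2 + d_{1,1} x^2 y^2) (the bihomogenisation has no component at infinity).\<close>
definition Kpoly :: "real \<Rightarrow> (int \<Rightarrow> int \<Rightarrow> real) \<Rightarrow> complex \<Rightarrow> complex \<Rightarrow> complex" where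
  "Kpoly t d x y = x * y - complex_of_real t * (of_real (d 1 (-1)) * x^2 + of_real (d (-1) 1) * y^2
      + of_real (d 1 0) * x^2 * y + of_real (d 0 1) * x * y^2 + of_real (d 1 1) * x^2 * y^2)"

definition Et_closure :: "real \<Rightarrow> (int \<Rightarrow> int \<Rightarrow> real) \<Rightarrow> (complex option \<times> complex option) set" where
  "Et_closure t d = {(X, Y). (case (X, Y) of
       (Some x, Some y) \<Rightarrow> Kpoly t d x y = 0
     | (None, Some y) \<Rightarrow> - complex_of_real t * (of_real (d 1 (-1)) + of_real (d 1 0) * y + of_real (d 1 1) * y^2) = 0
     | (Some x, None) \<Rightarrow> - complex_of_real t * (of_real (d (-1) 1) + of_real (d 0 1) * x + of_real (d 1 1) * x^2) = 0
     | (None, None) \<Rightarrow> - complex_of_real t * of_real (d 1 1) = 0)}"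

type_synonym ratfun = "complex poly fract"

definition rconst :: "complex \<Rightarrow> ratfun" where
  "rconst c = Fract [:c:] 1"

definition rf_eval :: "ratfun \<Rightarrow> complex option \<Rightarrow> complex option" where
  "rf_eval f P = (let (p, q) = quot_of_fract f in
     (case P of
        Some z \<Rightarrow> (if poly q z \<noteq> 0 then Some (poly p z / poly q z) else None)
      | None \<Rightarrow> (if degree p > degree q then None
                 else if degree p = degree q then Some (lead_coeff p / lead_coeff q)
                 else Some 0)))"

definition rf_ord :: "ratfun \<Rightarrow> complex option \<Rightarrow> int" where
  "rf_ord f P = (let (p, q) = quot_of_fract f in
     (case P of
        Some z \<Rightarrow> int (order z p) - int (order z q)
      | None \<Rightarrow> int (degree q) - int (degree p)))"

definition divisor :: "ratfun \<Rightarrow> complex option \<Rightarrow> int" where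
  "divisor f = rf_ord f"

definition pt :: "complex option \<Rightarrow> complex option \<Rightarrow> int" where
  "pt P = (\<lambda>X. if X = P then 1 else 0)"

definition rf_poly_comp :: "complex poly \<Rightarrow> ratfun \<Rightarrow> ratfun" where
  "rf_poly_comp r f = (\<Sum>i\<le>degree r. rconst (coeff r i) * f ^ i)"

definition gen_subfield :: "ratfun \<Rightarrow> ratfun set" where
  "gen_subfield f = {rf_poly_comp P f / rf_poly_comp Q f | P Q. rf_poly_comp Q f \<noteq> 0}"

definition ext_degree :: "ratfun set \<Rightarrow> nat \<Rightarrow> bool" where
  "ext_degree K n \<longleftrightarrow> (\<exists>bs. length bs = n \<and>
     (\<forall>v. \<exists>!cs. length cs = n \<and> set cs \<subseteq> K \<and> v = (\<Sum>i<n. cs ! i * bs ! i)))"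

definition coeffs_in :: "complex set \<Rightarrow> ratfun \<Rightarrow> bool" where
  "coeffs_in K f \<longleftrightarrow> (\<exists>p q. q \<noteq> 0 \<and> (\<forall>i. coeff p i \<in> K) \<and> (\<forall>i. coeff q i \<in> K) \<and> f = Fract p q)"

end

theory Submission imports Defs begin

lemma rconst_eq: "rconst c = to_fract [:c:]"
  by (simp add: rconst_def to_fract_def)

lemma rconst_add: "rconst (a + b) = rconst a + rconst b"
  by (simp add: rconst_eq flip: to_fract_add)
lemma rconst_diff: "rconst (a - b) = rconst a - rconst b"
  by (simp add: rconst_eq flip: to_fract_diff)
lemma rconst_mult: "rconst (a * b) = rconst a * rconst b"
  by (simp add: rconst_eq flip: to_fract_mult)
lemma rconst_0[simp]: "rconst 0 = 0"
  by (simp add: rconst_eq)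
lemma rconst_1[simp]: "rconst 1 = 1"
  by (simp add: rconst_eq one_pCons[symmetric])
lemma rconst_eq_0_iff[simp]: "rconst a = 0 \<longleftrightarrow> a = 0"
  by (simp add: rconst_eq)

lemma rconst_m1: "rconst (-1) = -1"
  using rconst_diff[of 0 1] by simp

lemma rpc_alt: "rf_poly_comp P f = poly (map_poly rconst P) f"
proof -
  have d: "degree (map_poly rconst P) = degree P"
    by (rule degree_map_poly) simp
  show ?thesis
    unfolding rf_poly_comp_def poly_altdef d
    by (simp add: coeff_map_poly)
qed

lemma map_rconst_add: "map_poly rconst (P + Q) = map_poly rconst P + map_poly rconst Q"
  by (rule poly_eqI) (simp add: coeff_map_poly rconst_add)

lemma map_rconst_smult: "map_poly rconst (smult c P) = smult (rconst c) (map_poly rconst P)"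
  by (rule map_poly_smult) (simp_all add: rconst_mult)

lemma rpc_add: "rf_poly_comp (P + Q) f = rf_poly_comp P f + rf_poly_comp Q f"
  by (simp add: rpc_alt map_rconst_add)

lemma rpc_smult: "rf_poly_comp (smult c P) f = rconst c * rf_poly_comp P f"
  by (simp add: rpc_alt map_rconst_smult)

lemma rpc_pCons: "rf_poly_comp (pCons a P) f = rconst a + f * rf_poly_comp P f"
  by (simp add: rpc_alt map_poly_pCons)

lemma rpc_0[simp]: "rf_poly_comp 0 f = 0"
  by (simp add: rpc_alt)

lemma rpc_const: "rf_poly_comp [:c:] f = rconst c"
  by (simp add: rpc_pCons)

lemma rpc_X: "rf_poly_comp [:0,1:] f = f"
  by (simp add: rpc_pCons)

lemma rpc_mult: "rf_poly_comp (P * Q) f = rf_poly_comp P f * rf_poly_comp Q f"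
proof (induction P)
  case 0
  then show ?case by simp
next
  case (pCons a P)
  have "pCons a P * Q = smult a Q + pCons 0 (P * Q)" by simp
  then show ?case using pCons.IH
    by (simp add: rpc_add rpc_smult rpc_pCons algebra_simps)
qed

lemma rpc_minus: "rf_poly_comp (- P) f = - rf_poly_comp P f"
proof -
  have "rf_poly_comp (- P) f = rf_poly_comp (smult (-1) P) f" by simp
  also have "\<dots> = - rf_poly_comp P f" by (simp only: rpc_smult rconst_m1) simp
  finally show ?thesis .
qed

lemma rpc_diff: "rf_poly_comp (P - Q) f = rf_poly_comp P f - rf_poly_comp Q f"
  using rpc_add[of P "-Q" f] rpc_minus[of Q f] by simp

lemma rpc_1: "rf_poly_comp 1 f = 1"
  using rpc_const[of 1 f] by (simp add: one_pCons)

lemma gsf_mem: "rf_poly_comp Q f \<noteq> 0 \<Longrightarrow> rf_poly_comp P f / rf_poly_comp Q f \<in> gen_subfield f"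
  unfolding gen_subfield_def by blast

lemma gsf_0: "0 \<in> gen_subfield f"
  using gsf_mem[of 1 f 0] by (simp add: rpc_1)

lemma gsf_const: "rconst c \<in> gen_subfield f"
  using gsf_mem[of 1 f "[:c:]"] by (simp add: rpc_1 rpc_const)

lemma gsf_self: "f \<in> gen_subfield f"
  using gsf_mem[of 1 f "[:0,1:]"] by (simp add: rpc_1 rpc_X)

lemma gsf_add: "u \<in> gen_subfield f \<Longrightarrow> v \<in> gen_subfield f \<Longrightarrow> u + v \<in> gen_subfield f"
proof -
  assume "u \<in> gen_subfield f" "v \<in> gen_subfield f"
  then obtain P Q P' Q' where u: "u = rf_poly_comp P f / rf_poly_comp Q f" "rf_poly_comp Q f \<noteq> 0"
    and v: "v = rf_poly_comp P' f / rf_poly_comp Q' f" "rf_poly_comp Q' f \<noteq> 0"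
    unfolding gen_subfield_def by blast
  have "u + v = rf_poly_comp (P * Q' + P' * Q) f / rf_poly_comp (Q * Q') f"
    unfolding u(1) v(1) using u(2) v(2) by (simp add: rpc_add rpc_mult field_simps)
  moreover have "rf_poly_comp (Q * Q') f \<noteq> 0" using u v by (simp add: rpc_mult)
  ultimately show ?thesis using gsf_mem by metis
qed

lemma gsf_mult: "u \<in> gen_subfield f \<Longrightarrow> v \<in> gen_subfield f \<Longrightarrow> u * v \<in> gen_subfield f"
proof -
  assume "u \<in> gen_subfield f" "v \<in> gen_subfield f"
  then obtain P Q P' Q' where u: "u = rf_poly_comp P f / rf_poly_comp Q f" "rf_poly_comp Q f \<noteq> 0"
    and v: "v = rf_poly_comp P' f / rf_poly_comp Q' f" "rf_poly_comp Q' f \<noteq> 0"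
    unfolding gen_subfield_def by blast
  have "u * v = rf_poly_comp (P * P') f / rf_poly_comp (Q * Q') f"
    unfolding u(1) v(1) by (simp add: rpc_mult)
  moreover have "rf_poly_comp (Q * Q') f \<noteq> 0" using u v by (simp add: rpc_mult)
  ultimately show ?thesis using gsf_mem by metis
qed

lemma gsf_inverse: "u \<in> gen_subfield f \<Longrightarrow> inverse u \<in> gen_subfield f"
proof -
  assume "u \<in> gen_subfield f"
  then obtain P Q where u: "u = rf_poly_comp P f / rf_poly_comp Q f" "rf_poly_comp Q f \<noteq> 0"
    unfolding gen_subfield_def by blast
  show ?thesis
  proof (cases "rf_poly_comp P f = 0")
    case True then show ?thesis using u gsf_0 by simp
  next
    case False
    have "inverse u = rf_poly_comp Q f / rf_poly_comp P f" using u by simp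
    then show ?thesis using gsf_mem False by metis
  qed
qed

lemma gsf_uminus: "u \<in> gen_subfield f \<Longrightarrow> - u \<in> gen_subfield f"
  using gsf_mult[OF gsf_const[of "-1" f]] by (simp add: rconst_m1)

lemma gsf_diff: "u \<in> gen_subfield f \<Longrightarrow> v \<in> gen_subfield f \<Longrightarrow> u - v \<in> gen_subfield f"
  using gsf_add[of u f "-v"] gsf_uminus by simp

lemma gsf_divide: "u \<in> gen_subfield f \<Longrightarrow> v \<in> gen_subfield f \<Longrightarrow> u / v \<in> gen_subfield f"
  using gsf_mult[of u f "inverse v"] gsf_inverse by (simp add: divide_inverse)

lemma gsf_1: "1 \<in> gen_subfield f"
  using gsf_const[of 1 f] by simp


lemma to_fract_power: "to_fract (p ^ n) = to_fract p ^ n"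
  by (induction n) simp_all

lemma tf_smult: "to_fract (smult a p) = rconst a * to_fract p"
proof -
  have "smult a p = [:a:] * p" by simp
  then have "to_fract (smult a p) = to_fract ([:a:] * p)" by (rule arg_cong)
  then show ?thesis by (simp only: rconst_eq to_fract_mult)
qed

lemma tf_pCons: "to_fract (pCons a p) = rconst a + to_fract [:0,1:] * to_fract p"
proof -
  have h: "pCons a p = [:a:] + [:0,1:] * p" by (simp add: poly_eq_iff coeff_pCons split: nat.splits)
  have "to_fract (pCons a p) = to_fract ([:a:] + [:0,1:] * p)" using h by (rule arg_cong)
  then show ?thesis by (simp only: to_fract_add to_fract_mult rconst_eq)
qed

lemma tf_rpc: "to_fract p = rf_poly_comp p (to_fract [:0,1:])"
proof (induction p)
  case 0
  then show ?case by simp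
next
  case (pCons a p)
  show ?case unfolding tf_pCons[of a p] rpc_pCons pCons.IH[symmetric] ..
qed

lemma rf_ord_Fract:
  assumes "a \<noteq> 0" "b \<noteq> 0"
  shows "rf_ord (Fract a b) (Some z) = int (order z a) - int (order z b)"
    and "rf_ord (Fract a b) None = int (degree b) - int (degree a)"
proof -
  obtain p q where pq: "quot_of_fract (Fract a b) = (p, q)" by (cases "quot_of_fract (Fract a b)")
  have q0: "q \<noteq> 0" using snd_quot_of_fract_nonzero[of "Fract a b"] pq by simp
  have "Fract p q = Fract a b" using Fract_quot_of_fract[of "Fract a b"] pq by simp
  then have e: "p * b = a * q" using q0 assms eq_fract(1) by metis
  have p0: "p \<noteq> 0" using e assms q0 by auto
  have "order z (p * b) = order z (a * q)" using e by simp
  then have "order z p + order z b = order z a + order z q"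
    using p0 q0 assms by (simp add: order_mult)
  then show "rf_ord (Fract a b) (Some z) = int (order z a) - int (order z b)"
    unfolding rf_ord_def pq by simp
  have "degree (p * b) = degree (a * q)" using e by simp
  then have "degree p + degree b = degree a + degree q"
    using p0 q0 assms by (simp add: degree_mult_eq)
  then show "rf_ord (Fract a b) None = int (degree b) - int (degree a)"
    unfolding rf_ord_def pq by simp
qed

lemma root_split:
  fixes p :: "complex poly"
  assumes "degree p = Suc n"
  shows "\<exists>r q. p = [:-r,1:] * q \<and> degree q = n"
proof -
  have "\<not> constant (poly p)" by (subst constant_degree) (simp add: assms)
  then obtain r where "poly p r = 0" using fundamental_theorem_of_algebra by blast
  then obtain q where q: "p = [:-r,1:] * q" using poly_eq_0_iff_dvd by (metis dvdE)
  then have "q \<noteq> 0" using assms by auto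
  then have "degree p = degree [:-r,1:] + degree q" using q degree_mult_eq[of "[:-r,1:]" q] by simp
  then have "degree p = 1 + degree q" by simp
  then show ?thesis using q assms by auto
qed

lemma order_lin: "order z [:-r,1:] = (if z = r then 1 else 0)"
proof (cases "z = r")
  case True
  then show ?thesis using order_power_n_n[of r 1] by simp
next
  case False
  then show ?thesis by (simp add: order_0I)
qed


locale qfield =
  fixes K :: "'a::field set" and S \<alpha> \<beta> :: 'a
  assumes K0: "0 \<in> K" and K1: "1 \<in> K"
    and Kadd: "\<And>u v. u \<in> K \<Longrightarrow> v \<in> K \<Longrightarrow> u + v \<in> K"
    and Kmult: "\<And>u v. u \<in> K \<Longrightarrow> v \<in> K \<Longrightarrow> u * v \<in> K"
    and Kuminus: "\<And>u. u \<in> K \<Longrightarrow> - u \<in> K"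
    and Kinv: "\<And>u. u \<in> K \<Longrightarrow> inverse u \<in> K"
    and SK: "S \<notin> K" and rel: "S * S = \<alpha> * S + \<beta>" and \<alpha>K: "\<alpha> \<in> K" and \<beta>K: "\<beta> \<in> K"
begin

definition "V = {c0 + c1 * S | c0 c1. c0 \<in> K \<and> c1 \<in> K}"

lemma Kdiff: "u \<in> K \<Longrightarrow> v \<in> K \<Longrightarrow> u - v \<in> K"
  using Kadd[of u "-v"] Kuminus[of v] by simp

lemma Kdiv: "u \<in> K \<Longrightarrow> v \<in> K \<Longrightarrow> u / v \<in> K"
  using Kmult[of u "inverse v"] Kinv[of v] by (simp add: divide_inverse)

lemma VI: "c0 \<in> K \<Longrightarrow> c1 \<in> K \<Longrightarrow> c0 + c1 * S \<in> V"
  unfolding V_def by blast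

lemma VE: "v \<in> V \<Longrightarrow> (\<And>c0 c1. c0 \<in> K \<Longrightarrow> c1 \<in> K \<Longrightarrow> v = c0 + c1 * S \<Longrightarrow> P) \<Longrightarrow> P"
  unfolding V_def by blast

lemma V_K: "c \<in> K \<Longrightarrow> c \<in> V"
  using VI[of c 0] K0 by simp

lemma V_S: "S \<in> V"
  using VI[of 0 1] K0 K1 by simp

lemma V_add: "u \<in> V \<Longrightarrow> v \<in> V \<Longrightarrow> u + v \<in> V"
proof -
  assume "u \<in> V" "v \<in> V"
  then obtain c0 c1 d0 d1 where c: "c0 \<in> K" "c1 \<in> K" "u = c0 + c1 * S"
    and d: "d0 \<in> K" "d1 \<in> K" "v = d0 + d1 * S" by (metis VE)
  have "u + v = (c0 + d0) + (c1 + d1) * S" using c d by (simp add: algebra_simps)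
  then show ?thesis using VI[OF Kadd[OF c(1) d(1)] Kadd[OF c(2) d(2)]] by simp
qed

lemma V_mult: "u \<in> V \<Longrightarrow> v \<in> V \<Longrightarrow> u * v \<in> V"
proof -
  assume "u \<in> V" "v \<in> V"
  then obtain c0 c1 d0 d1 where c: "c0 \<in> K" "c1 \<in> K" "u = c0 + c1 * S"
    and d: "d0 \<in> K" "d1 \<in> K" "v = d0 + d1 * S" by (metis VE)
  have "u * v = c0 * d0 + (c0 * d1 + c1 * d0) * S + c1 * d1 * (S * S)"
    using c d by (simp add: algebra_simps)
  also have "\<dots> = (c0 * d0 + c1 * d1 * \<beta>) + (c0 * d1 + c1 * d0 + c1 * d1 * \<alpha>) * S"
    unfolding rel by (simp add: algebra_simps)
  finally show ?thesis using c d \<alpha>K \<beta>K by (simp add: VI Kadd Kmult)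
qed

lemma V_unique: "c0 \<in> K \<Longrightarrow> c1 \<in> K \<Longrightarrow> d0 \<in> K \<Longrightarrow> d1 \<in> K \<Longrightarrow>
   c0 + c1 * S = d0 + d1 * S \<Longrightarrow> c0 = d0 \<and> c1 = d1"
proof -
  assume c: "c0 \<in> K" "c1 \<in> K" and d: "d0 \<in> K" "d1 \<in> K" and e: "c0 + c1 * S = d0 + d1 * S"
  show ?thesis
  proof (cases "c1 = d1")
    case True then show ?thesis using e by simp
  next
    case False
    then have "S = (d0 - c0) / (c1 - d1)" using e by (simp add: field_simps)
    then have "S \<in> K" using c d by (simp add: Kdiv Kdiff)
    then show ?thesis using SK by simp
  qed
qed

lemma V_inverse: "u \<in> V \<Longrightarrow> inverse u \<in> V"
proof -
  assume "u \<in> V"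
  then obtain c0 c1 where c: "c0 \<in> K" "c1 \<in> K" "u = c0 + c1 * S" by (metis VE)
  define u' where "u' = (c0 + c1 * \<alpha>) + (- c1) * S"
  define M where "M = c0 * c0 + c0 * c1 * \<alpha> - c1 * c1 * \<beta>"
  have MK: "M \<in> K" unfolding M_def using c \<alpha>K \<beta>K by (simp add: Kdiff Kadd Kmult)
  have uu: "u * u' = M" unfolding u'_def M_def c(3)
  proof -
    have "(c0 + c1 * S) * (c0 + c1 * \<alpha> + - c1 * S) =
       c0 * c0 + c0 * c1 * \<alpha> + c1 * c1 * (\<alpha> * S - S * S)" by (simp add: algebra_simps)
    also have "\<dots> = c0 * c0 + c0 * c1 * \<alpha> - c1 * c1 * \<beta>" unfolding rel by (simp add: algebra_simps)
    finally show "(c0 + c1 * S) * (c0 + c1 * \<alpha> + - c1 * S) = c0 * c0 + c0 * c1 * \<alpha> - c1 * c1 * \<beta>" .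
  qed
  show ?thesis
  proof (cases "u = 0")
    case True then show ?thesis using V_K K0 by simp
  next
    case u0: False
    show ?thesis
    proof (cases "M = 0")
      case False
      have "inverse u = u' / M" using uu u0 False by (simp add: field_simps)
      also have "\<dots> = (c0 + c1 * \<alpha>) / M + (- c1 / M) * S" using False
        by (simp add: u'_def diff_divide_distrib add_divide_distrib)
      finally have "inverse u = (c0 + c1 * \<alpha>) / M + (- c1 / M) * S" .
      moreover have "(c0 + c1 * \<alpha>) / M \<in> K" "- c1 / M \<in> K" using c \<alpha>K MK
        by (simp_all add: Kdiv Kadd Kmult Kuminus)
      ultimately show ?thesis using VI by metis
    next
      case True
      then have "u' = 0" using uu u0 by simp
      then have "(c0 + c1 * \<alpha>) + (- c1) * S = 0 + 0 * S" unfolding u'_def by simp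
      moreover have "c0 + c1 * \<alpha> \<in> K" "- c1 \<in> K" using c \<alpha>K by (simp_all add: Kadd Kmult Kuminus)
      ultimately have "c0 + c1 * \<alpha> = 0 \<and> - c1 = 0"
        using V_unique[of "c0 + c1 * \<alpha>" "- c1" 0 0] K0 by blast
      then have "- c1 = 0" "c0 + c1 * \<alpha> = 0" by auto
      then have "u = 0" using c by simp
      then show ?thesis using u0 by simp
    qed
  qed
qed

lemma V_divide: "u \<in> V \<Longrightarrow> v \<in> V \<Longrightarrow> u / v \<in> V"
  using V_mult[of u "inverse v"] V_inverse[of v] by (simp add: divide_inverse)

end

context
  fixes N :: "complex poly" and \<kappa> :: complex
  assumes degN: "degree N = 2" and N0: "poly N 0 \<noteq> 0" and k0: "\<kappa> \<noteq> 0"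
begin

definition "Dk = [:0, \<kappa>:]"
definition "gg = to_fract N / to_fract Dk"

lemma Dk0: "Dk \<noteq> 0" using k0 by (simp add: Dk_def)
lemma tfDk0: "to_fract Dk \<noteq> 0" using Dk0 by simp
lemma polyDk0: "poly (Dk ^ Suc m) 0 = 0" by (simp add: Dk_def)
lemma degDk: "degree Dk = 1" using k0 by (simp add: Dk_def)
lemma N_nz: "N \<noteq> 0" using degN by auto

lemma Hexists:
  "P \<noteq> 0 \<Longrightarrow> \<exists>H. rf_poly_comp P gg = to_fract H / to_fract Dk ^ degree P \<and> poly H 0 \<noteq> 0
      \<and> degree H = 2 * degree P"
proof (induction P)
  case 0
  then show ?case by simp
next
  case (pCons a P)
  show ?case
  proof (cases "P = 0")
    case True
    then have "a \<noteq> 0" using pCons by simp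
    then show ?thesis using True
      by (intro exI[of _ "[:a:]"]) (simp add: rpc_const rconst_eq)
  next
    case False
    then obtain H where H: "rf_poly_comp P gg = to_fract H / to_fract Dk ^ degree P"
       "poly H 0 \<noteq> 0" "degree H = 2 * degree P" using pCons.IH by blast
    define m where "m = degree P"
    define H' where "H' = smult a (Dk ^ Suc m) + N * H"
    have H0: "H \<noteq> 0" using H(2) by auto
    have dg: "degree (pCons a P) = Suc m" using False m_def by simp
    have "rf_poly_comp (pCons a P) gg = rconst a + gg * (to_fract H / to_fract Dk ^ m)"
      using H(1) by (simp add: rpc_pCons m_def)
    also have "\<dots> = to_fract H' / to_fract Dk ^ Suc m"
    proof -
      have e1: "to_fract H' = rconst a * to_fract Dk ^ Suc m + to_fract N * to_fract H"
        by (simp add: H'_def tf_smult to_fract_power)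
      show ?thesis unfolding e1 gg_def using tfDk0 by (simp add: field_simps)
    qed
    finally have 1: "rf_poly_comp (pCons a P) gg = to_fract H' / to_fract Dk ^ degree (pCons a P)"
      using dg by simp
    have 2: "poly H' 0 \<noteq> 0" using N0 H(2) by (simp add: H'_def Dk_def)
    have "degree (smult a (Dk ^ Suc m)) \<le> Suc m"
      using degree_smult_le[of a "Dk ^ Suc m"] degree_power_le[of Dk "Suc m"] degDk by simp
    moreover have "degree (N * H) = 2 + 2 * m" using degN H(3) H0 N_nz m_def
      by (simp add: degree_mult_eq)
    ultimately have "degree H' = 2 * degree (pCons a P)" unfolding H'_def dg
      by (subst degree_add_eq_right) auto
    then show ?thesis using 1 2 by blast
  qed
qed

lemma order_Dk_pow: "order 0 (Dk ^ m) = m"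
proof -
  have "Dk ^ m = smult (\<kappa> ^ m) ([:-0,1:] ^ m)"
    by (simp add: Dk_def smult_power[symmetric])
  moreover have "\<kappa> ^ m \<noteq> 0" using k0 by simp
  ultimately show ?thesis using order_smult[of "\<kappa>^m" 0 "[:-0,1:] ^ m"] order_power_n_n[of 0 m]
    by simp
qed

lemma deg_Dk_pow: "degree (Dk ^ m) = m"
  using degDk Dk0 by (simp add: degree_power_eq)

lemma S_notin: "to_fract [:0,1:] \<notin> gen_subfield gg"
proof
  assume "to_fract [:0,1:] \<in> gen_subfield gg"
  then obtain P Q where PQ: "to_fract [:0,1:] = rf_poly_comp P gg / rf_poly_comp Q gg"
    "rf_poly_comp Q gg \<noteq> 0" unfolding gen_subfield_def by blast
  have Q0: "Q \<noteq> 0" using PQ(2) by auto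
  have S0: "to_fract [:0,1:] \<noteq> (0::ratfun)" by simp
  have "rf_poly_comp P gg \<noteq> 0" using PQ S0 by auto
  then have P0: "P \<noteq> 0" by auto
  obtain HP where HP: "rf_poly_comp P gg = to_fract HP / to_fract Dk ^ degree P" "poly HP 0 \<noteq> 0"
      "degree HP = 2 * degree P" using Hexists[OF P0] by blast
  obtain HQ where HQ: "rf_poly_comp Q gg = to_fract HQ / to_fract Dk ^ degree Q" "poly HQ 0 \<noteq> 0"
      "degree HQ = 2 * degree Q" using Hexists[OF Q0] by blast
  define m where "m = degree P"
  define n where "n = degree Q"
  have "to_fract [:0,1:] * rf_poly_comp Q gg = rf_poly_comp P gg" using PQ by (simp add: field_simps)
  then have "to_fract [:0,1:] * (to_fract HQ / to_fract Dk ^ n) = to_fract HP / to_fract Dk ^ m"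
    using HP(1) HQ(1) m_def n_def by simp
  then have "to_fract [:0,1:] * to_fract HQ * to_fract Dk ^ m = to_fract HP * to_fract Dk ^ n"
    using tfDk0 by (simp add: field_simps)
  moreover have "to_fract ([:0,1:] * HQ * Dk^m) = to_fract [:0,1:] * to_fract HQ * to_fract Dk ^ m"
    by (simp only: to_fract_mult to_fract_power)
  moreover have "to_fract (HP * Dk^n) = to_fract HP * to_fract Dk ^ n"
    by (simp only: to_fract_mult to_fract_power)
  ultimately have E: "[:0,1:] * HQ * Dk^m = HP * Dk^n" by (metis to_fract_eq_iff)
  have HQ0: "HQ \<noteq> 0" using HQ(2) by auto
  have HP0: "HP \<noteq> 0" using HP(2) by auto
  have DkP: "Dk ^ j \<noteq> 0" for j using Dk0 by simp
  have X0: "[:0,1::complex:] \<noteq> 0" by simp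
  have oX: "order 0 [:0,1::complex:] = 1" using order_lin[of 0 0] by simp
  have nz1: "[:0,1:] * HQ \<noteq> 0" using HQ0 X0 by (metis mult_eq_0_iff)
  have nz2: "[:0,1:] * HQ * Dk^m \<noteq> 0" using nz1 DkP by (metis mult_eq_0_iff)
  have nz3: "HP * Dk^n \<noteq> 0" using HP0 DkP by (metis mult_eq_0_iff)
  have o1: "order 0 ([:0,1:] * HQ * Dk^m) = order 0 [:0,1::complex:] + order 0 HQ + order 0 (Dk^m)"
    by (simp only: order_mult[OF nz2] order_mult[OF nz1])
  have o2: "order 0 (HP * Dk^n) = order 0 HP + order 0 (Dk^n)"
    by (simp only: order_mult[OF nz3])
  have "1 + 0 + m = 0 + n"
    using E o1 o2 oX order_0I[OF HQ(2)] order_0I[OF HP(2)] order_Dk_pow by metis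
  moreover
  have d1: "degree ([:0,1:] * HQ * Dk^m) = degree [:0,1::complex:] + degree HQ + degree (Dk^m)"
    by (simp only: degree_mult_eq[OF nz1 DkP] degree_mult_eq[OF X0 HQ0])
  have d2: "degree (HP * Dk^n) = degree HP + degree (Dk^n)"
    by (simp only: degree_mult_eq[OF HP0 DkP])
  have "1 + 2 * n + m = 2 * m + n"
    using E d1 d2 HQ(3) HP(3) deg_Dk_pow m_def n_def by simp
  ultimately show False by simp
qed

lemma Dk_smult: "Dk = smult \<kappa> [:-0,1:]"
  by (simp add: Dk_def)

lemma order_Dk: "order z Dk = (if z = 0 then 1 else 0)"
  using order_smult[OF k0, of z "[:-0,1:]"] order_lin[of z 0] by (simp add: Dk_smult)

lemma gg_Fract: "gg = Fract N Dk"
  by (simp add: gg_def Fract_conv_to_fract)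

lemma gg_nz: "gg \<noteq> 0"
  using N_nz tfDk0 by (simp add: gg_def)

lemma gg_divisor: "\<exists>P1 P2. P1 \<noteq> Some 0 \<and> P1 \<noteq> None \<and> P2 \<noteq> Some 0 \<and> P2 \<noteq> None \<and>
   divisor gg = (\<lambda>P. pt P1 P + pt P2 P - pt (Some 0) P - pt None P)"
proof -
  obtain r1 q1 where q1: "N = [:-r1,1:] * q1" "degree q1 = 1" using root_split[of N 1] degN by auto
  obtain r2 q2 where q2: "q1 = [:-r2,1:] * q2" "degree q2 = 0" using root_split[of q1 0] q1(2) by auto
  obtain c where c: "q2 = [:c:]" using q2(2) by (metis degree_eq_zeroE)
  have c0: "c \<noteq> 0" using q1 q2 c degN by auto
  have nz1: "[:-r2,1:] * q2 \<noteq> 0" using q1 q2 degN by auto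
  have nz2: "[:-r1,1:] * q1 \<noteq> 0" using q1 degN by auto
  have ordN: "order z N = order z [:-r1,1:] + order z [:-r2,1:]" for z
  proof -
    have "order z q2 = 0" using c c0 by (intro order_0I) simp
    then show ?thesis using order_mult[OF nz2, of z] order_mult[OF nz1, of z] q1(1) q2(1) by simp
  qed
  have "poly N r1 = 0" using q1 by simp
  then have r1: "r1 \<noteq> 0" using N0 by auto
  have "poly N r2 = 0" using q1 q2 by simp
  then have r2: "r2 \<noteq> 0" using N0 by auto
  have "divisor gg = (\<lambda>P. pt (Some r1) P + pt (Some r2) P - pt (Some 0) P - pt None P)"
  proof
    fix P
    show "divisor gg P = pt (Some r1) P + pt (Some r2) P - pt (Some 0) P - pt None P"
    proof (cases P)
      case None
      then show ?thesis unfolding divisor_def gg_Fract using rf_ord_Fract(2)[OF N_nz Dk0] degN degDk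
        by (simp add: pt_def)
    next
      case (Some z)
      then show ?thesis unfolding divisor_def gg_Fract using rf_ord_Fract(1)[OF N_nz Dk0, of z]
        by (simp add: pt_def ordN order_lin order_Dk)
    qed
  qed
  then show ?thesis using r1 r2 by blast
qed

lemma sum2: "(\<Sum>i<(2::nat). f i) = f 0 + (f 1 :: 'a::comm_monoid_add)"
  by (simp add: numeral_2_eq_2)

lemma gg_ext_degree: "ext_degree (gen_subfield gg) 2"
proof -
  define S :: ratfun where "S = to_fract [:0,1:]"
  define n0 n1 n2 where "n0 = coeff N 0" and "n1 = coeff N 1" and "n2 = coeff N 2"
  have n2: "n2 \<noteq> 0" using degN N_nz n2_def by (metis leading_coeff_0_iff)
  have tN: "to_fract N = rconst n0 + rconst n1 * S + rconst n2 * (S * S)"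
    unfolding S_def tf_rpc[of N] rf_poly_comp_def degN n0_def n1_def n2_def
    by (simp add: numeral_2_eq_2 power2_eq_square)
  have tD: "to_fract Dk = rconst \<kappa> * S"
    unfolding S_def Dk_smult tf_smult by simp
  have eq: "gg * (rconst \<kappa> * S) = to_fract N" using tfDk0 tD by (simp add: gg_def)
  define \<alpha> where "\<alpha> = (rconst \<kappa> * gg - rconst n1) / rconst n2"
  define \<beta> where "\<beta> = - rconst n0 / rconst n2"
  have n2': "rconst n2 \<noteq> 0" using n2 by simp
  have h: "rconst n2 * (S * S) = rconst \<kappa> * gg * S - rconst n1 * S - rconst n0"
    using eq tN by (simp add: algebra_simps)
  have a2: "rconst n2 * \<alpha> = rconst \<kappa> * gg - rconst n1" unfolding \<alpha>_def using n2' by simp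
  have b2: "rconst n2 * \<beta> = - rconst n0" unfolding \<beta>_def using n2' by simp
  have "rconst n2 * (\<alpha> * S + \<beta>) = (rconst n2 * \<alpha>) * S + rconst n2 * \<beta>"
    by (simp only: distrib_left mult.assoc)
  also have "\<dots> = (rconst \<kappa> * gg - rconst n1) * S + - rconst n0" by (simp only: a2 b2)
  also have "\<dots> = rconst n2 * (S * S)" unfolding h by (simp add: algebra_simps)
  finally have rel: "S * S = \<alpha> * S + \<beta>" using n2' by simp
  interpret Q: qfield "gen_subfield gg" S \<alpha> \<beta>
  proof
    show "S \<notin> gen_subfield gg" using S_notin S_def by simp
    show "\<alpha> \<in> gen_subfield gg" unfolding \<alpha>_def
      by (intro gsf_divide gsf_diff gsf_mult gsf_const gsf_self)
    show "\<beta> \<in> gen_subfield gg" unfolding \<beta>_def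
      by (intro gsf_divide gsf_uminus gsf_const)
  qed (fact gsf_0 gsf_1 gsf_add gsf_mult gsf_uminus gsf_inverse rel)+
  have tfV: "to_fract p \<in> Q.V" for p
  proof (induction p)
    case 0
    then show ?case using Q.V_K gsf_0 by simp
  next
    case (pCons a p)
    show ?case unfolding tf_pCons[of a p]
      using Q.V_add[OF Q.V_K[OF gsf_const] Q.V_mult[OF Q.V_S pCons.IH]] S_def by simp
  qed
  have allV: "v \<in> Q.V" for v
  proof (cases v)
    case (Fract p q)
    then show ?thesis using Q.V_divide[OF tfV tfV] by (simp add: Fract_conv_to_fract)
  qed
  show ?thesis unfolding ext_degree_def
  proof (intro exI[of _ "[1, S]"] conjI allI)
    show "length [1, S] = 2" by simp
    fix v
    obtain c0 c1 where c: "c0 \<in> gen_subfield gg" "c1 \<in> gen_subfield gg" "v = c0 + c1 * S"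
      using allV[of v] by (metis Q.VE)
    show "\<exists>!cs. length cs = 2 \<and> set cs \<subseteq> gen_subfield gg \<and> v = (\<Sum>i<2. cs ! i * [1, S] ! i)"
    proof (rule ex1I[of _ "[c0, c1]"])
      show "length [c0, c1] = 2 \<and> set [c0, c1] \<subseteq> gen_subfield gg \<and> v = (\<Sum>i<2. [c0, c1] ! i * [1, S] ! i)"
        using c by (simp add: sum2)
    next
      fix cs
      assume a: "length cs = 2 \<and> set cs \<subseteq> gen_subfield gg \<and> v = (\<Sum>i<2. cs ! i * [1, S] ! i)"
      then have "length cs = Suc (Suc 0)" by simp
      then obtain x0 x1 where cs: "cs = [x0, x1]"
        by (auto simp: length_Suc_conv)
      have "x0 \<in> gen_subfield gg" "x1 \<in> gen_subfield gg" "v = x0 + x1 * S"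
        using a cs by (simp_all add: sum2)
      then have "x0 = c0 \<and> x1 = c1" using Q.V_unique c by metis
      then show "cs = [c0, c1]" using cs by simp
    qed
  qed
qed

lemma gg_all:
  "ext_degree (gen_subfield (to_fract N / to_fract [:0,\<kappa>:])) 2 \<and> to_fract N / to_fract [:0,\<kappa>:] \<noteq> 0 \<and>
    (\<exists>P1 P2. P1 \<noteq> Some 0 \<and> P1 \<noteq> None \<and> P2 \<noteq> Some 0 \<and> P2 \<noteq> None \<and>
       divisor (to_fract N / to_fract [:0,\<kappa>:]) = (\<lambda>P. pt P1 P + pt P2 P - pt (Some 0) P - pt None P))"
  using gg_ext_degree gg_nz gg_divisor unfolding gg_def Dk_def by blast

end

lemma coprime_no_common_root:
  fixes p q :: "complex poly"
  assumes "coprime p q" "poly p z = 0" shows "poly q z \<noteq> 0"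
proof
  assume "poly q z = 0"
  then have "[:-z,1:] dvd p" "[:-z,1:] dvd q" using assms poly_eq_0_iff_dvd by blast+
  then have "is_unit [:-z,1:]" using assms(1) coprime_common_divisor by blast
  then show False using is_unit_iff_degree[of "[:-z,1::complex:]"] by simp
qed

lemma ratfun_form:
  fixes f :: ratfun and Q1 Q2 :: "complex option"
  assumes f0: "f \<noteq> 0" and Qne: "Q1 \<noteq> Some 0" "Q2 \<noteq> Some 0" "Q1 \<noteq> None" "Q2 \<noteq> None"
    and div: "divisor f = (\<lambda>P. pt (Some 0) P + pt None P - pt Q1 P - pt Q2 P)"
  shows "\<exists>c q. c \<noteq> 0 \<and> quot_of_fract f = ([:0,c:], q) \<and> degree q = 2 \<and> poly q 0 \<noteq> 0"
proof -
  obtain p q where pq: "quot_of_fract f = (p, q)" by (cases "quot_of_fract f")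
  have q0: "q \<noteq> 0" using snd_quot_of_fract_nonzero[of f] pq by simp
  have p0: "p \<noteq> 0" using fst_quot_of_fract_eq_0_iff[of f] pq f0 by simp
  have cop: "coprime p q" using coprime_quot_of_fract[of f] pq by simp
  have ordS: "int (order z p) - int (order z q) = pt (Some 0) (Some z) + pt None (Some z) - pt Q1 (Some z) - pt Q2 (Some z)" for z
    using fun_cong[OF div, of "Some z"] unfolding divisor_def rf_ord_def pq by simp
  have ordN: "int (degree q) - int (degree p) = pt (Some 0) None + pt None None - pt Q1 None - pt Q2 None"
    using fun_cong[OF div, of None] unfolding divisor_def rf_ord_def pq by simp
  have noroot: "poly p z \<noteq> 0" if "z \<noteq> 0" for z
  proof
    assume pz: "poly p z = 0"
    then have "poly q z \<noteq> 0" using cop coprime_no_common_root by blast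
    then have "order z q = 0" by (rule order_0I)
    moreover have "order z p > 0" using pz p0 order_root by blast
    ultimately show False using ordS[of z] that by (auto simp: pt_def split: if_splits)
  qed
  have o0: "int (order 0 p) - int (order 0 q) = 1" using ordS[of 0] Qne by (simp add: pt_def)
  then have "order 0 p \<noteq> 0" by linarith
  then have "poly p 0 = 0" using order_root by blast
  then have q00: "poly q 0 \<noteq> 0" using cop coprime_no_common_root by blast
  then have "order 0 q = 0" by (rule order_0I)
  then have op: "order 0 p = 1" using o0 by linarith
  have "[:-0,1:] ^ order 0 p dvd p" by (rule order_1)
  then obtain p1 where p1: "p = [:0,1:] * p1" using op by (auto elim: dvdE)
  have p10: "p1 \<noteq> 0" using p1 p0 by auto
  have "order 0 p = order 0 [:-0,1::complex:] + order 0 p1" using order_mult[of "[:-0,1:]" p1] p1 p0 by simp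
  moreover have "order 0 [:-0,1::complex:] = 1" using order_lin[of "0::complex" 0] by simp
  ultimately have "order 0 p1 = 0" using op by simp
  then have p1_0: "poly p1 0 \<noteq> 0" using order_root p10 by blast
  have "poly p1 z \<noteq> 0" for z
  proof (cases "z = 0")
    case True then show ?thesis using p1_0 by simp
  next
    case False then show ?thesis using noroot[of z] p1 by auto
  qed
  then have "degree p1 = 0" using fundamental_theorem_of_algebra constant_degree by metis
  then obtain c where c: "p1 = [:c:]" by (metis degree_eq_zeroE)
  have c0: "c \<noteq> 0" using c p10 by simp
  have pc: "p = [:0,c:]" using p1 c by simp
  have "degree q = 2" using ordN Qne pc c0 by (auto simp: pt_def split: if_splits)
  then show ?thesis using pq pc c0 q00 by blast
qed

lemma key_alg:
  fixes u v A T d1 d2 :: complex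
  assumes "u \<noteq> 0" "T \<noteq> 0" "d1 \<noteq> 0" "u * v = T * (d1 * u^2 + d2 * v^2)" "A * v = T * d1 * u"
  shows "A = A^2 + T^2 * d1 * d2"
proof -
  have e1: "A^2 * (u * v) = T * d1 * A^2 * u^2 + T * d2 * (A * v)^2"
    using assms(4) by (simp add: algebra_simps power2_eq_square)
  have e2: "A^2 * (u * v) = A * u * (A * v)" by (simp add: algebra_simps power2_eq_square)
  have "T * d1 * u^2 * A = T * d1 * u^2 * (A^2 + T^2 * d1 * d2)"
    using e1 e2 assms(5) by (simp add: algebra_simps power2_eq_square)
  moreover have "T * d1 * u^2 \<noteq> 0" using assms by simp
  ultimately show ?thesis by simp
qed

lemma poly_zero_cofinite:
  fixes F :: "complex poly"
  assumes "finite A" "\<And>z. z \<notin> A \<Longrightarrow> poly F z = 0"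
  shows "F = 0"
proof (rule ccontr)
  assume "F \<noteq> 0"
  then have "finite {z. poly F z = 0}" by (rule poly_roots_finite)
  moreover have "UNIV \<subseteq> A \<union> {z. poly F z = 0}" using assms(2) by blast
  ultimately have "finite (UNIV :: complex set)" using assms(1) by (meson finite_Un finite_subset)
  then show False using infinite_UNIV_char_0 by blast
qed

lemma gen_field_subfield: "is_subfield (gen_field S)"
  unfolding is_subfield_def gen_field_def by auto

lemma gen_field_sup: "S \<subseteq> gen_field S"
  unfolding gen_field_def by auto

lemma transc_ineq:
  assumes tr: "transcendental_over F T" and sf: "is_subfield F" and AF: "A \<in> F"
    and d1F: "d1 \<in> F" and d2F: "d2 \<in> F" and dd: "d1 * d2 \<noteq> 0"
  shows "A - A^2 \<noteq> T^2 * d1 * d2"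
proof
  assume eq: "A - A^2 = T^2 * d1 * d2"
  define p where "p = [:-(A - A^2), 0, d1 * d2:]"
  have p0: "p \<noteq> 0" using dd by (simp add: p_def)
  have mem: "0 \<in> F" "\<And>u v. u \<in> F \<Longrightarrow> v \<in> F \<Longrightarrow> u - v \<in> F"
    "\<And>u v. u \<in> F \<Longrightarrow> v \<in> F \<Longrightarrow> u * v \<in> F"
    using sf unfolding is_subfield_def by auto
  have c0: "-(A - A^2) \<in> F" using mem AF
    by (metis diff_0 power2_eq_square)
  have c2: "d1 * d2 \<in> F" using mem d1F d2F by blast
  have "coeff p i \<in> F" for i
    using c0 c2 mem(1) by (auto simp: p_def coeff_pCons split: nat.split)
  moreover have "poly p T = 0" using eq by (simp add: p_def algebra_simps power2_eq_square)
  ultimately show False using tr p0 unfolding transcendental_over_def algebraic_over_def by blast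
qed

lemma fr_lemma:
  fixes A B c c' S X Y :: "'a::field"
  assumes "c \<noteq> 0" "c' \<noteq> 0" "S \<noteq> 0" "X \<noteq> 0" "Y \<noteq> 0"
  shows "A / (c * S / X) - B / (c' * S / Y) = (A * c' * X - B * c * Y) / (c * c' * S)"
  using assms by (simp add: field_simps)

lemma coeff4_deg3:
  fixes p :: "complex poly"
  assumes "degree p = 2" shows "coeff ([:0,1:] * p) 4 = 0"
proof -
  have "degree ([:0,1:] * p) \<le> degree [:0,1::complex:] + degree p" by (rule degree_mult_le)
  then have "degree ([:0,1:] * p) < 4" using assms by simp
  then show ?thesis by (rule coeff_eq_0)
qed

lemma coeff_pCons_4: "coeff (pCons a p) 4 = coeff p 3"
proof -
  have "(4::nat) = Suc 3" by simp
  then show ?thesis by (simp only: coeff_pCons_Suc)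
qed

lemma coeff_quad_4: "coeff [:a, b, e:] 4 = 0"
  by (rule coeff_eq_0) simp

lemma coeff4_mult:
  fixes p q :: "complex poly"
  assumes "degree p = 2" "degree q = 2" shows "coeff (p * q) 4 = lead_coeff p * lead_coeff q"
  using coeff_mult_degree_sum[of p q] assms by simp

theorem proposition1p4:
  fixes k :: nat and d :: "int \<Rightarrow> int \<Rightarrow> real" and a b t :: real
    and x y :: ratfun and Q1 Q2 Q3 Q4 :: "complex option"
  assumes model: "admissible_weights k d"
    and ab: "a > 0" "b > 0"
    and t01: "0 < t" "t < 1"
    and t_transc: "transcendental_over (base_field k d a b) (complex_of_real t)"
    and x_coeffs: "coeffs_in (alg_closure (gen_field (base_field k d a b \<union> {complex_of_real t}))) x"
    and y_coeffs: "coeffs_in (alg_closure (gen_field (base_field k d a b \<union> {complex_of_real t}))) y"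
    and onto: "(\<lambda>s. (rf_eval x s, rf_eval y s)) ` UNIV = Et_closure t d"
    and bij: "\<And>s1 s2. (rf_eval x s1, rf_eval y s1) = (rf_eval x s2, rf_eval y s2) \<Longrightarrow>
                 s1 = s2 \<or> {s1, s2} = {Some 0, None}"
    and at0: "(rf_eval x (Some 0), rf_eval y (Some 0)) = (Some 0, Some 0)"
    and atinf: "(rf_eval x None, rf_eval y None) = (Some 0, Some 0)"
    and x_nz: "x \<noteq> 0" and y_nz: "y \<noteq> 0"
    and Q_ne: "\<forall>Q\<in>{Q1, Q2, Q3, Q4}. Q \<noteq> Some 0 \<and> Q \<noteq> None"
    and div_x: "divisor x = (\<lambda>P. pt (Some 0) P + pt None P - pt Q1 P - pt Q2 P)"
    and div_y: "divisor y = (\<lambda>P. pt (Some 0) P + pt None P - pt Q3 P - pt Q4 P)"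
  shows "let A = 1 - 1 / a; B = 1 - 1 / b;
             g1 = rconst (complex_of_real A) / x - rconst (complex_of_real (t * d 1 (-1))) / y;
             g2 = rconst (complex_of_real B) / y - rconst (complex_of_real (t * d (-1) 1)) / x
         in ext_degree (gen_subfield g1) 2 \<and> ext_degree (gen_subfield g2) 2 \<and>
            (\<exists>P1 P2 P3 P4. (\<forall>P\<in>{P1, P2, P3, P4}. P \<noteq> Some 0 \<and> P \<noteq> None) \<and>
               g1 \<noteq> 0 \<and> g2 \<noteq> 0 \<and>
               divisor g1 = (\<lambda>P. pt P1 P + pt P2 P - pt (Some 0) P - pt None P) \<and>
               divisor g2 = (\<lambda>P. pt P3 P + pt P4 P - pt (Some 0) P - pt None P))"
proof -
  define T where "T = complex_of_real t"
  define d1 where "d1 = complex_of_real (d 1 (-1))"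
  define d2 where "d2 = complex_of_real (d (-1) 1)"
  define Ac where "Ac = complex_of_real (1 - 1 / a)"
  define Bc where "Bc = complex_of_real (1 - 1 / b)"
  define F0 where "F0 = base_field k d a b"
  have T0: "T \<noteq> 0" using t01 by (simp add: T_def)
  have st: "(1, -1) \<in> step_set k" "(-1, 1) \<in> step_set k" by (auto simp: step_set_def)
  have dpos: "d 1 (-1) > 0" "d (-1) 1 > 0" using model st unfolding admissible_weights_def by auto
  have d10: "d1 \<noteq> 0" "d2 \<noteq> 0" using dpos by (auto simp: d1_def d2_def)
  have sfF: "is_subfield F0" unfolding F0_def base_field_def by (rule gen_field_subfield)
  have supF: "(\<lambda>(i,j). complex_of_real (d i j)) ` step_set k \<union> {complex_of_real a, complex_of_real b} \<subseteq> F0"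
    unfolding F0_def base_field_def by (rule gen_field_sup)
  have d1F: "d1 \<in> F0" using supF st unfolding d1_def by force
  have d2F: "d2 \<in> F0" using supF st unfolding d2_def by force
  have aF: "complex_of_real a \<in> F0" "complex_of_real b \<in> F0" using supF by auto
  have AcF: "Ac \<in> F0"
  proof -
    have "Ac = 1 - inverse (complex_of_real a)" by (simp add: Ac_def divide_inverse)
    then show ?thesis using sfF aF ab unfolding is_subfield_def by auto
  qed
  have BcF: "Bc \<in> F0"
  proof -
    have "Bc = 1 - inverse (complex_of_real b)" by (simp add: Bc_def divide_inverse)
    then show ?thesis using sfF aF ab unfolding is_subfield_def by auto
  qed
  have trF: "transcendental_over F0 T" using t_transc by (simp add: F0_def T_def)
  have ineqA: "Ac - Ac^2 \<noteq> T^2 * d1 * d2" by (rule transc_ineq[OF trF sfF AcF d1F d2F]) (simp add: d10)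
  have ineqB: "Bc - Bc^2 \<noteq> T^2 * d2 * d1" by (rule transc_ineq[OF trF sfF BcF d2F d1F]) (simp add: d10)
  obtain c qx where cx: "c \<noteq> 0" "quot_of_fract x = ([:0,c:], qx)" "degree qx = 2" "poly qx 0 \<noteq> 0"
    using ratfun_form[OF x_nz _ _ _ _ div_x] Q_ne by auto
  obtain c' qy where cy: "c' \<noteq> 0" "quot_of_fract y = ([:0,c':], qy)" "degree qy = 2" "poly qy 0 \<noteq> 0"
    using ratfun_form[OF y_nz _ _ _ _ div_y] Q_ne by auto
  have qx0: "qx \<noteq> 0" and qy0: "qy \<noteq> 0" using cx cy by auto
  have xeq: "x = to_fract [:0,c:] / to_fract qx"
    using Fract_quot_of_fract[of x] cx(2) by (simp add: Fract_conv_to_fract)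
  have yeq: "y = to_fract [:0,c':] / to_fract qy"
    using Fract_quot_of_fract[of y] cy(2) by (simp add: Fract_conv_to_fract)
  define S :: ratfun where "S = to_fract [:0,1:]"
  have S0: "S \<noteq> 0" by (simp add: S_def)
  have tfc: "to_fract [:0,e:] = rconst e * S" for e
  proof -
    have "[:0,e:] = smult e [:0,1:]" by simp
    then show ?thesis unfolding S_def by (metis tf_smult)
  qed
  define F where "F = smult (c * c') (qx * qy) - smult T (smult (d1 * c^2) (qy * qy)
      + smult (d2 * c'^2) (qx * qx) + smult (complex_of_real (d 1 0) * c^2 * c') ([:0,1:] * qy)
      + smult (complex_of_real (d 0 1) * c * c'^2) ([:0,1:] * qx)
      + smult (complex_of_real (d 1 1) * c^2 * c'^2) [:0,0,1:])"
  have Fz: "poly F z = 0" if z: "z \<notin> {0} \<union> {z. poly qx z = 0} \<union> {z. poly qy z = 0}" for z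
  proof -
    have z0: "z \<noteq> 0" and X0: "poly qx z \<noteq> 0" and Y0: "poly qy z \<noteq> 0" using z by auto
    have "(rf_eval x (Some z), rf_eval y (Some z)) \<in> Et_closure t d" using onto by blast
    moreover have "rf_eval x (Some z) = Some (c * z / poly qx z)"
      using X0 cx(2) by (simp add: rf_eval_def)
    moreover have "rf_eval y (Some z) = Some (c' * z / poly qy z)"
      using Y0 cy(2) by (simp add: rf_eval_def)
    ultimately have K: "Kpoly t d (c * z / poly qx z) (c' * z / poly qy z) = 0"
      by (simp add: Et_closure_def)
    have "poly F z * z^2 = Kpoly t d (c * z / poly qx z) (c' * z / poly qy z) * (poly qx z)^2 * (poly qy z)^2"
      using X0 Y0 unfolding F_def Kpoly_def T_def d1_def d2_def
      by (simp add: field_simps power2_eq_square)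
    then show ?thesis using K z0 by simp
  qed
  have F0: "F = 0"
    by (rule poly_zero_cofinite[of "{0} \<union> {z. poly qx z = 0} \<union> {z. poly qy z = 0}", OF _ Fz])
      (simp_all add: poly_roots_finite qx0 qy0)
  define ax ay lx ly where "ax = poly qx 0" and "ay = poly qy 0" and "lx = lead_coeff qx"
    and "ly = lead_coeff qy"
  have ax0: "ax \<noteq> 0" "ay \<noteq> 0" using cx cy ax_def ay_def by auto
  have lx0: "lx \<noteq> 0" "ly \<noteq> 0" using qx0 qy0 lx_def ly_def by auto
  have rel0: "c * c' * (ax * ay) = T * (d1 * c^2 * (ay * ay) + d2 * c'^2 * (ax * ax))"
    using arg_cong[OF F0, of "\<lambda>p. poly p 0"] unfolding F_def ax_def ay_def by simp
  have rel4: "c * c' * (lx * ly) = T * (d1 * c^2 * (ly * ly) + d2 * c'^2 * (lx * lx))"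
    using arg_cong[OF F0, of "\<lambda>p. coeff p 4"] unfolding F_def lx_def ly_def
    by (simp add: coeff4_mult cx(3) cy(3) coeff_pCons_4 coeff_quad_4 coeff_eq_0)
  define N1 where "N1 = smult (Ac * c') qx - smult (T * d1 * c) qy"
  define N2 where "N2 = smult (Bc * c) qy - smult (T * d2 * c') qx"
  have N1_0: "poly N1 0 \<noteq> 0"
  proof
    assume "poly N1 0 = 0"
    then have e: "Ac * (c' * ax) = T * d1 * (c * ay)" unfolding N1_def ax_def ay_def
      by (simp add: algebra_simps)
    have r: "(c * ay) * (c' * ax) = T * (d1 * (c * ay)^2 + d2 * (c' * ax)^2)"
      using rel0 by (simp add: algebra_simps power2_eq_square)
    have "Ac = Ac^2 + T^2 * d1 * d2" by (rule key_alg[OF _ T0 d10(1) r e]) (use cx(1) ax0 in simp)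
    then show False using ineqA by (metis add_diff_cancel_left')
  qed
  have N2_0: "poly N2 0 \<noteq> 0"
  proof
    assume "poly N2 0 = 0"
    then have e: "Bc * (c * ay) = T * d2 * (c' * ax)" unfolding N2_def ax_def ay_def
      by (simp add: algebra_simps)
    have r: "(c' * ax) * (c * ay) = T * (d2 * (c' * ax)^2 + d1 * (c * ay)^2)"
      using rel0 by (simp add: algebra_simps power2_eq_square)
    have "Bc = Bc^2 + T^2 * d2 * d1" by (rule key_alg[OF _ T0 d10(2) r e]) (use cy(1) ax0 in simp)
    then show False using ineqB by (metis add_diff_cancel_left')
  qed
  have N1_2: "coeff N1 2 \<noteq> 0"
  proof
    assume "coeff N1 2 = 0"
    then have e: "Ac * (c' * lx) = T * d1 * (c * ly)" unfolding N1_def lx_def ly_def cx(3) cy(3)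
      by (simp add: algebra_simps)
    have r: "(c * ly) * (c' * lx) = T * (d1 * (c * ly)^2 + d2 * (c' * lx)^2)"
      using rel4 by (simp add: algebra_simps power2_eq_square)
    have "Ac = Ac^2 + T^2 * d1 * d2" by (rule key_alg[OF _ T0 d10(1) r e]) (use cx(1) lx0 in simp)
    then show False using ineqA by (metis add_diff_cancel_left')
  qed
  have N2_2: "coeff N2 2 \<noteq> 0"
  proof
    assume "coeff N2 2 = 0"
    then have e: "Bc * (c * ly) = T * d2 * (c' * lx)" unfolding N2_def lx_def ly_def cx(3) cy(3)
      by (simp add: algebra_simps)
    have r: "(c' * lx) * (c * ly) = T * (d2 * (c' * lx)^2 + d1 * (c * ly)^2)"
      using rel4 by (simp add: algebra_simps power2_eq_square)
    have "Bc = Bc^2 + T^2 * d2 * d1" by (rule key_alg[OF _ T0 d10(2) r e]) (use cy(1) lx0 in simp)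
    then show False using ineqB by (metis add_diff_cancel_left')
  qed
  have degN1: "degree N1 = 2"
  proof (rule antisym)
    show "degree N1 \<le> 2" unfolding N1_def
      using degree_diff_le[of "smult (Ac * c') qx" 2 "smult (T * d1 * c) qy"]
        degree_smult_le[of "Ac * c'" qx] degree_smult_le[of "T * d1 * c" qy] cx(3) cy(3) by simp
    show "2 \<le> degree N1" using N1_2 by (rule le_degree)
  qed
  have degN2: "degree N2 = 2"
  proof (rule antisym)
    show "degree N2 \<le> 2" unfolding N2_def
      using degree_diff_le[of "smult (Bc * c) qy" 2 "smult (T * d2 * c') qx"]
        degree_smult_le[of "Bc * c" qy] degree_smult_le[of "T * d2 * c'" qx] cx(3) cy(3) by simp
    show "2 \<le> degree N2" using N2_2 by (rule le_degree)
  qed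
  have tqx: "to_fract qx \<noteq> 0" "to_fract qy \<noteq> 0" using qx0 qy0 by auto
  have g1eq: "rconst (complex_of_real (1 - 1 / a)) / x - rconst (complex_of_real (t * d 1 (-1))) / y
      = (to_fract N1 / to_fract [:0, c * c':])"
  proof -
    have "rconst (complex_of_real (1 - 1 / a)) / x - rconst (complex_of_real (t * d 1 (-1))) / y
        = rconst Ac / (rconst c * S / to_fract qx) - rconst (T * d1) / (rconst c' * S / to_fract qy)"
      unfolding xeq yeq tfc Ac_def T_def d1_def by simp
    also have "\<dots> = (rconst Ac * rconst c' * to_fract qx - rconst (T * d1) * rconst c * to_fract qy)
        / (rconst c * rconst c' * S)"
      by (rule fr_lemma) (use cx(1) cy(1) S0 tqx in auto)
    also have "\<dots> = (to_fract N1 / to_fract [:0, c * c':])"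
      unfolding tfc N1_def by (simp add: tf_smult rconst_mult)
    finally show ?thesis .
  qed
  have g2eq: "rconst (complex_of_real (1 - 1 / b)) / y - rconst (complex_of_real (t * d (-1) 1)) / x
      = (to_fract N2 / to_fract [:0, c' * c:])"
  proof -
    have "rconst (complex_of_real (1 - 1 / b)) / y - rconst (complex_of_real (t * d (-1) 1)) / x
        = rconst Bc / (rconst c' * S / to_fract qy) - rconst (T * d2) / (rconst c * S / to_fract qx)"
      unfolding xeq yeq tfc Bc_def T_def d2_def by simp
    also have "\<dots> = (rconst Bc * rconst c * to_fract qy - rconst (T * d2) * rconst c' * to_fract qx)
        / (rconst c' * rconst c * S)"
      by (rule fr_lemma) (use cx(1) cy(1) S0 tqx in auto)
    also have "\<dots> = (to_fract N2 / to_fract [:0, c' * c:])"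
      unfolding tfc N2_def by (simp add: tf_smult rconst_mult)
    finally show ?thesis .
  qed
  have G1: "ext_degree (gen_subfield ((to_fract N1 / to_fract [:0, c * c':]))) 2 \<and> (to_fract N1 / to_fract [:0, c * c':]) \<noteq> 0 \<and>
    (\<exists>P1 P2. P1 \<noteq> Some 0 \<and> P1 \<noteq> None \<and> P2 \<noteq> Some 0 \<and> P2 \<noteq> None \<and>
       divisor ((to_fract N1 / to_fract [:0, c * c':])) = (\<lambda>P. pt P1 P + pt P2 P - pt (Some 0) P - pt None P))"
    by (rule gg_all[OF degN1 N1_0]) (use cx(1) cy(1) in simp)
  have G2: "ext_degree (gen_subfield ((to_fract N2 / to_fract [:0, c' * c:]))) 2 \<and> (to_fract N2 / to_fract [:0, c' * c:]) \<noteq> 0 \<and>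
    (\<exists>P1 P2. P1 \<noteq> Some 0 \<and> P1 \<noteq> None \<and> P2 \<noteq> Some 0 \<and> P2 \<noteq> None \<and>
       divisor ((to_fract N2 / to_fract [:0, c' * c:])) = (\<lambda>P. pt P1 P + pt P2 P - pt (Some 0) P - pt None P))"
    by (rule gg_all[OF degN2 N2_0]) (use cx(1) cy(1) in simp)
  obtain P1 P2 where p12: "P1 \<noteq> Some 0" "P1 \<noteq> None" "P2 \<noteq> Some 0" "P2 \<noteq> None"
    "divisor (to_fract N1 / to_fract [:0, c * c':]) = (\<lambda>P. pt P1 P + pt P2 P - pt (Some 0) P - pt None P)"
    using G1 by blast
  obtain P3 P4 where p34: "P3 \<noteq> Some 0" "P3 \<noteq> None" "P4 \<noteq> Some 0" "P4 \<noteq> None"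
    "divisor (to_fract N2 / to_fract [:0, c' * c:]) = (\<lambda>P. pt P3 P + pt P4 P - pt (Some 0) P - pt None P)"
    using G2 by blast
  have all: "\<forall>P\<in>{P1, P2, P3, P4}. P \<noteq> Some 0 \<and> P \<noteq> None" using p12 p34 by auto
  show ?thesis unfolding Let_def g1eq g2eq
    using G1 G2 p12(5) p34(5) all by blast
qed



end
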